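(* Let $\mathcal I$ be a finite set of followers, $\pi$ a fixed leader strategy, and for each $i\in\mathcal I$ let $\mathcal X_i=\{x^i\in\mathbb{R}^{m_F}\mid A_ix^i=b_i,\ G_ix^i\le h_i\}$ be nonempty, compact and satisfying Slater's condition. Let $J^i(x^i,x^{-i},\pi)=\tfrac12 (x^i)^TPx^i+(x^i)^TQ\sigma(x^{-i})+r_i^Tx^i+(x^i)^TS_i\pi$ with $\sigma(x^{-i})=\sum_{j\ne i}x^j$, $P=P^T\succ0$, $Q=Q^T\succeq0$, $P\succ Q$, $S_i$ diagonal with $S_i\succeq0$, and let $x^*=(x^{i*},x^{-i*})$ be the unique Nash equilibrium of the followers' game (obtained by the Picard–Banach iteration $x_{k+1}=\Pi_{\mathcal X}[x_k-\gamma F(x_k,\pi)]$). Fix $i$; let $\overline G_i,\overline h_i$ be the rows of $G_i,h_i$ corresponding to constraints active at $x^{i*}$ and $\underline G_i,\underline h_i$ the remaining rows (so $\overline G_ix^{i*}=\overline h_i$, $\underline G_ix^{i*}<\underline h_i$), and set $\overline A_i=\begin{bmatrix}A_i\\ \overline G_i\end{bmatrix}$, $\overline b_i=\begin{bmatrix}b_i\\ \overline h_i\end{bmatrix}$. Consider the auxiliary best-response problem $$\min_{x^i\in\mathbb{R}^{m_F}}J^i(x^i,x^{-i*},\pi)\ \text{ s.t. } \overline A_ix^i=\overline b_i,\ \underline G_ix^i\le\underline h_i,$$ with KKT map, for $z_i=(x^i,\lambda_i,\nu_i)$, $$l_i(z_i,\pi\mid x^{-i*})=\begin{bmatrix}\nabla_{x^i}J^i(x^i,x^{-i*},\pi)+\underline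 G_i^T\lambda_i+\overline A_i^T\nu_i\\ \mathrm{Dg}(\lambda_i)(\underline G_ix^i-\underline h_i)\\ \overline A_ix^i-\overline b_i\end{bmatrix},$$ and let $\hat z_i=(x^{i*},\hat\lambda_i,\hat\nu_i)$ be its KKT point (primal-dual optimal solution). Assume $\overline A_i$ has full row rank. Then the set $\overline\Gamma_i=\{j\mid (\hat\lambda_i)_j=0\text{ and }(\underline G_ix^{i*}-\underline h_i)_j=0\}$ is empty, and the Jacobian $\mathbf D_{z_i}l_i(\hat z_i,\pi\mid x^{-i*})$ is invertible and equals $$\begin{bmatrix}\nabla_{x^ix^i}J^i & \underline G_i^T & \overline A_i^T\\ \mathbf 0 & \mathrm{Dg}(\underline G_ix^{i*}-\underline h_i) & \mathbf 0\\ \overline A_i & \mathbf 0 & \mathbf 0\end{bmatrix}.$$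
   Context: $\mathrm{Dg}(v)$ denotes the diagonal matrix with the vector $v$ on its diagonal; $\mathbf D_{z}f$ denotes the Jacobian of $f$ with respect to $z$. $F(x,\pi)=\mathrm{col}((\nabla_{x^i}J^i)_i)$ is the pseudo-gradient of the followers' game and $\Pi_{\mathcal X}$ the Euclidean projection onto $\mathcal X=\prod_i\mathcal X_i$. *)

theory Defs
  imports "Jordan_Normal_Form.DL_Rank" "HOL-Analysis.Function_Topology"
begin

text \<open>Embedding of an n-vector into nat => real (product topology), used to speak of compactness.\<close>
definition vemb :: "nat \<Rightarrow> real vec \<Rightarrow> (nat \<Rightarrow> real)" where
  "vemb n v = (\<lambda>k. if k < n then v $ k else 0)"

definition polyhedron :: "nat \<Rightarrow> real mat \<Rightarrow> real vec \<Rightarrow> real mat \<Rightarrow> real vec \<Rightarrow> real vec set" where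
  "polyhedron n A b G h =
     {x \<in> carrier_vec n. A *\<^sub>v x = b \<and> (\<forall>k<dim_row G. (G *\<^sub>v x) $ k \<le> h $ k)}"

definition slater :: "nat \<Rightarrow> real mat \<Rightarrow> real vec \<Rightarrow> real mat \<Rightarrow> real vec \<Rightarrow> bool" where
  "slater n A b G h \<longleftrightarrow>
     (\<exists>x \<in> carrier_vec n. A *\<^sub>v x = b \<and> (\<forall>k<dim_row G. (G *\<^sub>v x) $ k < h $ k))"

definition sym_mat :: "real mat \<Rightarrow> bool" where
  "sym_mat P \<longleftrightarrow> transpose_mat P = P"

definition pos_def :: "nat \<Rightarrow> real mat \<Rightarrow> bool" where
  "pos_def n P \<longleftrightarrow> P \<in> carrier_mat n n \<and>
     (\<forall>x \<in> carrier_vec n. x \<noteq> 0\<^sub>v n \<longrightarrow> x \<bullet> (P *\<^sub>v x) > 0)"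

definition pos_semidef :: "nat \<Rightarrow> real mat \<Rightarrow> bool" where
  "pos_semidef n P \<longleftrightarrow> P \<in> carrier_mat n n \<and>
     (\<forall>x \<in> carrier_vec n. x \<bullet> (P *\<^sub>v x) \<ge> 0)"

definition sigma :: "nat \<Rightarrow> 'f set \<Rightarrow> 'f \<Rightarrow> ('f \<Rightarrow> real vec) \<Rightarrow> real vec" where
  "sigma n I i x = Matrix.vec n (\<lambda>k. \<Sum>j\<in>I - {i}. x j $ k)"

text \<open>J^i(y, x^{-i}, pi): own strategy y, the others' strategies read off the profile x.\<close>
definition Jcost :: "nat \<Rightarrow> real mat \<Rightarrow> real mat \<Rightarrow> ('f \<Rightarrow> real vec) \<Rightarrow> ('f \<Rightarrow> real mat)
    \<Rightarrow> 'f set \<Rightarrow> 'f \<Rightarrow> real vec \<Rightarrow> ('f \<Rightarrow> real vec) \<Rightarrow> real vec \<Rightarrow> real" where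
  "Jcost n P Q r S I i y x \<pi> =
     1/2 * (y \<bullet> (P *\<^sub>v y)) + y \<bullet> (Q *\<^sub>v sigma n I i x) + r i \<bullet> y + y \<bullet> (S i *\<^sub>v \<pi>)"

definition is_NE :: "'f set \<Rightarrow> ('f \<Rightarrow> real vec set) \<Rightarrow> ('f \<Rightarrow> real vec \<Rightarrow> ('f \<Rightarrow> real vec) \<Rightarrow> real)
    \<Rightarrow> ('f \<Rightarrow> real vec) \<Rightarrow> bool" where
  "is_NE I X J x \<longleftrightarrow> (\<forall>j\<in>I. x j \<in> X j \<and> (\<forall>y \<in> X j. J j (x j) x \<le> J j y x))"

definition partial :: "nat \<Rightarrow> (real vec \<Rightarrow> real) \<Rightarrow> real vec \<Rightarrow> nat \<Rightarrow> real" where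
  "partial n f x c = (THE D. ((\<lambda>t. f (x + t \<cdot>\<^sub>v unit_vec n c)) has_real_derivative D) (at 0))"

definition grad :: "nat \<Rightarrow> (real vec \<Rightarrow> real) \<Rightarrow> real vec \<Rightarrow> real vec" where
  "grad n f x = Matrix.vec n (\<lambda>c. partial n f x c)"

definition hess :: "nat \<Rightarrow> (real vec \<Rightarrow> real) \<Rightarrow> real vec \<Rightarrow> real mat" where
  "hess n f x = Matrix.mat n n (\<lambda>(r, c). partial n (\<lambda>y. grad n f y $ r) x c)"

definition jacobian_is :: "nat \<Rightarrow> (real vec \<Rightarrow> real vec) \<Rightarrow> real vec \<Rightarrow> real mat \<Rightarrow> bool" where
  "jacobian_is n F z D \<longleftrightarrow> D \<in> carrier_mat (dim_vec (F z)) n \<and>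
     (\<forall>r < dim_row D. \<forall>c < n.
        ((\<lambda>t. F (z + t \<cdot>\<^sub>v unit_vec n c) $ r) has_real_derivative (D $$ (r, c))) (at 0))"

definition rows_sel :: "real mat \<Rightarrow> nat list \<Rightarrow> real mat" where
  "rows_sel G ks = Matrix.mat (length ks) (dim_col G) (\<lambda>(r, c). G $$ (ks ! r, c))"

definition vec_sel :: "real vec \<Rightarrow> nat list \<Rightarrow> real vec" where
  "vec_sel h ks = Matrix.vec (length ks) (\<lambda>r. h $ (ks ! r))"

definition Dg :: "real vec \<Rightarrow> real mat" where
  "Dg v = mat_diag (dim_vec v) (\<lambda>j. v $ j)"

definition kkt_map :: "nat \<Rightarrow> (real vec \<Rightarrow> real) \<Rightarrow> real mat \<Rightarrow> real vec \<Rightarrow> real mat \<Rightarrow> real vec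
    \<Rightarrow> real vec \<Rightarrow> real vec" where
  "kkt_map n f Gu hu Ab bb z =
    (let nl = dim_row Gu; nv = dim_row Ab;
         x = Matrix.vec n (\<lambda>j. z $ j);
         lam = Matrix.vec nl (\<lambda>j. z $ (n + j));
         nu = Matrix.vec nv (\<lambda>j. z $ (n + nl + j))
     in (grad n f x + transpose_mat Gu *\<^sub>v lam + transpose_mat Ab *\<^sub>v nu)
        @\<^sub>v (Dg lam *\<^sub>v (Gu *\<^sub>v x - hu))
        @\<^sub>v (Ab *\<^sub>v x - bb))"

definition is_kkt_point :: "nat \<Rightarrow> (real vec \<Rightarrow> real) \<Rightarrow> real mat \<Rightarrow> real vec \<Rightarrow> real mat \<Rightarrow> real vec
    \<Rightarrow> real vec \<Rightarrow> real vec \<Rightarrow> real vec \<Rightarrow> bool" where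
  "is_kkt_point n f Gu hu Ab bb x lam nu \<longleftrightarrow>
     x \<in> carrier_vec n \<and> lam \<in> carrier_vec (dim_row Gu) \<and> nu \<in> carrier_vec (dim_row Ab) \<and>
     kkt_map n f Gu hu Ab bb (x @\<^sub>v lam @\<^sub>v nu) = 0\<^sub>v (n + dim_row Gu + dim_row Ab) \<and>
     (\<forall>j < dim_row Gu. lam $ j \<ge> 0 \<and> (Gu *\<^sub>v x) $ j \<le> hu $ j)"

definition block3 :: "real mat \<Rightarrow> real mat \<Rightarrow> real mat \<Rightarrow> real mat \<Rightarrow> real mat \<Rightarrow> real mat
    \<Rightarrow> real mat \<Rightarrow> real mat \<Rightarrow> real mat \<Rightarrow> real mat" where
  "block3 M11 M12 M13 M21 M22 M23 M31 M32 M33 =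
     four_block_mat (four_block_mat M11 M12 M21 M22) (M13 @\<^sub>r M23)
       (four_block_mat M31 M32 (0\<^sub>m 0 (dim_col M31)) (0\<^sub>m 0 (dim_col M32))) M33"

definition full_row_rank :: "real mat \<Rightarrow> bool" where
  "full_row_rank A \<longleftrightarrow> vec_space.rank (dim_row A) A = dim_row A"

definition act_idx :: "real mat \<Rightarrow> real vec \<Rightarrow> real vec \<Rightarrow> nat list" where
  "act_idx G h x = filter (\<lambda>k. (G *\<^sub>v x) $ k = h $ k) [0..<dim_row G]"

definition inact_idx :: "real mat \<Rightarrow> real vec \<Rightarrow> real vec \<Rightarrow> nat list" where
  "inact_idx G h x = filter (\<lambda>k. (G *\<^sub>v x) $ k \<noteq> h $ k) [0..<dim_row G]"

definition G_under :: "real mat \<Rightarrow> real vec \<Rightarrow> real vec \<Rightarrow> real mat" where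
  "G_under G h x = rows_sel G (inact_idx G h x)"

definition h_under :: "real mat \<Rightarrow> real vec \<Rightarrow> real vec \<Rightarrow> real vec" where
  "h_under G h x = vec_sel h (inact_idx G h x)"

definition A_bar :: "real mat \<Rightarrow> real mat \<Rightarrow> real vec \<Rightarrow> real vec \<Rightarrow> real mat" where
  "A_bar A G h x = A @\<^sub>r rows_sel G (act_idx G h x)"

definition b_bar :: "real vec \<Rightarrow> real mat \<Rightarrow> real vec \<Rightarrow> real vec \<Rightarrow> real vec" where
  "b_bar b G h x = b @\<^sub>v vec_sel h (act_idx G h x)"

end

theory Submission imports Defs begin

lemma quad_deriv: "((\<lambda>t::real. a + t * b + t^2 * q) has_real_derivative b) (at 0)"
  by (auto intro!: derivative_eq_intros)

lemma lin_deriv: "((\<lambda>t::real. a + t * b) has_real_derivative b) (at 0)"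
  by (auto intro!: derivative_eq_intros)

lemma partial_eq:
  assumes "((\<lambda>t. f (x + t \<cdot>\<^sub>v unit_vec n c)) has_real_derivative D) (at 0)"
  shows "partial n f x c = D"
  unfolding partial_def using assms by (rule the_equality) (metis DERIV_unique assms)

lemma sym_scalar:
  fixes P :: "real mat"
  assumes P: "P \<in> carrier_mat n n" and s: "transpose_mat P = P"
    and y: "y \<in> carrier_vec n" and e: "e \<in> carrier_vec n"
  shows "y \<bullet> (P *\<^sub>v e) = e \<bullet> (P *\<^sub>v y)"
proof -
  have "y \<bullet> (P *\<^sub>v e) = (\<Sum>a<n. y $ a * (\<Sum>b<n. P $$ (a, b) * e $ b))"
    using P y e by (simp add: scalar_prod_def row_def atLeast0LessThan)
  also have "\<dots> = (\<Sum>a<n. \<Sum>b<n. y $ a * P $$ (a, b) * e $ b)"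
    by (simp add: sum_distrib_left mult.assoc)
  also have "\<dots> = (\<Sum>b<n. \<Sum>a<n. y $ a * P $$ (a, b) * e $ b)"
    by (rule sum.swap)
  also have "\<dots> = (\<Sum>b<n. e $ b * (\<Sum>a<n. P $$ (b, a) * y $ a))"
  proof -
    have "P $$ (a, b) = P $$ (b, a)" if "a < n" "b < n" for a b
      using s P that by (metis carrier_matD(1) carrier_matD(2) index_transpose_mat(1))
    then show ?thesis by (auto simp: sum_distrib_left mult_ac intro!: sum.cong)
  qed
  also have "\<dots> = e \<bullet> (P *\<^sub>v y)"
    using P y e by (simp add: scalar_prod_def row_def atLeast0LessThan)
  finally show ?thesis .
qed

lemma quad_line:
  fixes P :: "real mat"
  assumes P: "P \<in> carrier_mat n n" and s: "transpose_mat P = P"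
    and y: "y \<in> carrier_vec n" and e: "e \<in> carrier_vec n" and k: "kv \<in> carrier_vec n"
  shows "1/2 * ((y + t \<cdot>\<^sub>v e) \<bullet> (P *\<^sub>v (y + t \<cdot>\<^sub>v e))) + (y + t \<cdot>\<^sub>v e) \<bullet> kv
     = (1/2 * (y \<bullet> (P *\<^sub>v y)) + y \<bullet> kv) + t * (e \<bullet> (P *\<^sub>v y) + e \<bullet> kv) + t^2 * (1/2 * (e \<bullet> (P *\<^sub>v e)))"
proof -
  have "P *\<^sub>v (y + t \<cdot>\<^sub>v e) = P *\<^sub>v y + t \<cdot>\<^sub>v (P *\<^sub>v e)"
    using P y e by (simp add: mult_add_distrib_mat_vec mult_mat_vec)
  moreover have "(y + t \<cdot>\<^sub>v e) \<bullet> (P *\<^sub>v y + t \<cdot>\<^sub>v (P *\<^sub>v e))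
     = y \<bullet> (P *\<^sub>v y) + t * (y \<bullet> (P *\<^sub>v e)) + t * (e \<bullet> (P *\<^sub>v y)) + t * t * (e \<bullet> (P *\<^sub>v e))"
    using P y e by (simp add: add_scalar_prod_distrib[of _ n] scalar_prod_add_distrib[of _ n] algebra_simps)
  moreover have "(y + t \<cdot>\<^sub>v e) \<bullet> kv = y \<bullet> kv + t * (e \<bullet> kv)"
    using y e k by (simp add: add_scalar_prod_distrib[of _ n])
  ultimately show ?thesis using sym_scalar[OF P s y e]
    by (simp add: algebra_simps power2_eq_square)
qed

lemma grad_quad:
  fixes P :: "real mat"
  assumes g: "\<forall>y \<in> carrier_vec n. g y = 1/2 * (y \<bullet> (P *\<^sub>v y)) + y \<bullet> kv"
    and P: "P \<in> carrier_mat n n" and s: "transpose_mat P = P"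
    and k: "kv \<in> carrier_vec n" and y: "y \<in> carrier_vec n"
  shows "grad n g y = P *\<^sub>v y + kv"
proof (rule eq_vecI)
  fix c assume "c < dim_vec (P *\<^sub>v y + kv)"
  then have c: "c < n" using k by simp
  let ?e = "unit_vec n c"
  have "partial n g y c = ?e \<bullet> (P *\<^sub>v y) + ?e \<bullet> kv"
  proof (rule partial_eq)
    have "(\<lambda>t. g (y + t \<cdot>\<^sub>v ?e)) = (\<lambda>t. (1/2 * (y \<bullet> (P *\<^sub>v y)) + y \<bullet> kv) + t * (?e \<bullet> (P *\<^sub>v y) + ?e \<bullet> kv) + t^2 * (1/2 * (?e \<bullet> (P *\<^sub>v ?e))))"
      using g y quad_line[OF P s y _ k] by (auto intro!: ext)
    then show "((\<lambda>t. g (y + t \<cdot>\<^sub>v ?e)) has_real_derivative ?e \<bullet> (P *\<^sub>v y) + ?e \<bullet> kv) (at 0)"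
      by (simp only:) (rule quad_deriv)
  qed
  then show "grad n g y $ c = (P *\<^sub>v y + kv) $ c"
    using c P y k by (simp add: grad_def)
qed (use k in \<open>simp add: grad_def\<close>)

lemma hess_quad:
  fixes P :: "real mat"
  assumes g: "\<forall>y \<in> carrier_vec n. g y = 1/2 * (y \<bullet> (P *\<^sub>v y)) + y \<bullet> kv"
    and P: "P \<in> carrier_mat n n" and s: "transpose_mat P = P"
    and k: "kv \<in> carrier_vec n" and y: "y \<in> carrier_vec n"
  shows "hess n g y = P"
proof (rule eq_matI)
  fix r c assume "r < dim_row P" "c < dim_col P"
  then have rc: "r < n" "c < n" using P by auto
  have "partial n (\<lambda>y. grad n g y $ r) y c = P $$ (r, c)"
  proof (rule partial_eq)
    let ?e = "unit_vec n c"
    have "grad n g (y + t \<cdot>\<^sub>v ?e) $ r = ((P *\<^sub>v y) $ r + kv $ r) + t * P $$ (r, c)" for t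
    proof -
      have "grad n g (y + t \<cdot>\<^sub>v ?e) = P *\<^sub>v (y + t \<cdot>\<^sub>v ?e) + kv"
        using grad_quad[OF g P s k] y by simp
      also have "\<dots> = P *\<^sub>v y + t \<cdot>\<^sub>v (P *\<^sub>v ?e) + kv"
        using P y by (simp add: mult_add_distrib_mat_vec mult_mat_vec)
      finally show ?thesis using rc P y k by simp
    qed
    then show "((\<lambda>t. grad n g (y + t \<cdot>\<^sub>v ?e) $ r) has_real_derivative P $$ (r, c)) (at 0)"
      using lin_deriv by simp
  qed
  then show "hess n g y $$ (r, c) = P $$ (r, c)" using rc by (simp add: hess_def)
qed (use P in \<open>auto simp: hess_def\<close>)

lemma self_scalar_zero:
  fixes w :: "real vec"
  assumes w: "w \<in> carrier_vec m" and z: "w \<bullet> w = 0"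
  shows "w = 0\<^sub>v m"
proof (rule eq_vecI)
  have "(\<Sum>i\<in>{0..<m}. w $ i * w $ i) = 0" using z w by (simp add: scalar_prod_def)
  then have "\<forall>i\<in>{0..<m}. w $ i * w $ i = 0"
    by (subst sum_nonneg_eq_0_iff[symmetric]) auto
  then show "w $ i = 0\<^sub>v m $ i" if "i < dim_vec (0\<^sub>v m)" for i using that by auto
qed (use w in auto)

lemma full_rank_ker:
  fixes A :: "real mat"
  assumes A: "A \<in> carrier_mat m k" and rk: "vec_space.rank m A = m"
    and w: "w \<in> carrier_vec m" and z: "transpose_mat A *\<^sub>v w = 0\<^sub>v k"
  shows "w = 0\<^sub>v m"
proof -
  interpret V: vec_space "TYPE(real)" m .
  let ?S = "set (cols A)"
  have Sc: "?S \<subseteq> carrier_vec m" using A cols_dim by blast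
  have fd: "vectorspace.fin_dim class_ring (V.vs (V.span ?S))"
    using V.fin_dim_span_cols[OF A] .
  have vsS: "vectorspace class_ring (V.vs (V.span ?S))"
    using V.span_is_subspace[of ?S] Sc V.subspace_is_vs by simp
  obtain B where fB: "finite B" and bB: "vectorspace.basis class_ring (V.vs (V.span ?S)) B"
    using vectorspace.finite_basis_exists[OF vsS fd] by blast
  have cB: "card B = m"
    using vectorspace.dim_basis[OF vsS fB bB] rk unfolding V.rank_def by simp
  have BS: "B \<subseteq> V.span ?S"
    using bB unfolding vectorspace.basis_def[OF vsS] by simp
  have subm: "submodule class_ring (V.span ?S) V.V" using V.span_is_submodule[OF Sc] .
  have liB': "LinearCombinations.module.lin_indpt class_ring (V.vs (V.span ?S)) B"
    using bB unfolding vectorspace.basis_def[OF vsS] by simp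
  have liB: "V.lin_indpt B"
    using liB' V.span_li_not_depend(2)[OF BS subm] by simp
  have BV: "B \<subseteq> carrier_vec m" using BS Sc V.span_closed by auto
  have basB: "V.basis B"
    by (rule V.dim_li_is_basis) (use fB BV liB cB V.dim_is_n in auto)
  have "carrier_vec m = V.span B" using basB unfolding V.basis_def by simp
  also have "\<dots> \<subseteq> V.span ?S"
    using V.span_is_subset[OF BS subm] by simp
  finally have spanS: "carrier_vec m \<subseteq> V.span ?S" .
  have "w \<in> V.orthogonal_complement ?S"
    unfolding V.orthogonal_complement_def
  proof (intro CollectI conjI ballI w)
    fix y assume "y \<in> ?S"
    then obtain j where j: "j < k" "y = col A j" using A by (auto simp: cols_def)
    have "(transpose_mat A *\<^sub>v w) $ j = 0" using z j by simp
    then show "w \<bullet> y = 0" using j A w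
      by (simp add: comm_scalar_prod[of w m])
  qed
  then have "w \<in> V.orthogonal_complement (V.span ?S)"
    using V.in_orthogonal_complement_span[OF Sc] by simp
  then have "w \<bullet> w = 0" using w spanS unfolding V.orthogonal_complement_def by auto
  then show ?thesis using w self_scalar_zero by blast
qed

lemma transpose_scalar:
  fixes A :: "real mat"
  assumes A: "A \<in> carrier_mat m k" and q: "q \<in> carrier_vec m" and u: "u \<in> carrier_vec k"
  shows "u \<bullet> (transpose_mat A *\<^sub>v q) = (A *\<^sub>v u) \<bullet> q"
proof -
  have "u \<bullet> (transpose_mat A *\<^sub>v q) = (\<Sum>a<k. u $ a * (\<Sum>b<m. A $$ (b, a) * q $ b))"
    using A q u by (simp add: scalar_prod_def row_def col_def atLeast0LessThan)
  also have "\<dots> = (\<Sum>a<k. \<Sum>b<m. u $ a * A $$ (b, a) * q $ b)"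
    by (simp add: sum_distrib_left mult.assoc)
  also have "\<dots> = (\<Sum>b<m. \<Sum>a<k. u $ a * A $$ (b, a) * q $ b)"
    by (rule sum.swap)
  also have "\<dots> = (\<Sum>b<m. (\<Sum>a<k. A $$ (b, a) * u $ a) * q $ b)"
    by (simp add: sum_distrib_right sum_distrib_left mult_ac)
  also have "\<dots> = (A *\<^sub>v u) \<bullet> q"
    using A q u by (simp add: scalar_prod_def row_def atLeast0LessThan)
  finally show ?thesis .
qed

lemma kernel_invertible:
  fixes M :: "real mat"
  assumes M: "M \<in> carrier_mat N N"
    and ker: "\<And>v. v \<in> carrier_vec N \<Longrightarrow> M *\<^sub>v v = 0\<^sub>v N \<Longrightarrow> v = 0\<^sub>v N"
  shows "invertible_mat M"
proof -
  have "det M \<noteq> 0" using det_0_iff_vec_prod_zero_field[OF M] ker by blast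
  from det_non_zero_imp_unit[OF M this, of "()"]
  obtain B where B: "B \<in> carrier_mat N N" "B * M = 1\<^sub>m N" "M * B = 1\<^sub>m N"
    unfolding Units_def ring_mat_def by auto
  then show ?thesis using M unfolding invertible_mat_def inverts_mat_def square_mat.simps
    by (metis carrier_matD(1) carrier_matD(2))
qed

lemma Dg_mult:
  assumes "j < dim_vec v" "dim_vec w = dim_vec v"
  shows "(Dg v *\<^sub>v w) $ j = v $ j * w $ j"
proof -
  have "(Dg v *\<^sub>v w) $ j = (\<Sum>k\<in>{0..<dim_vec v}. (if j = k then v $ k else 0) * w $ k)"
    using assms by (simp add: Dg_def mat_diag_def scalar_prod_def row_def)
  also have "\<dots> = (\<Sum>k\<in>{0..<dim_vec v}. if j = k then v $ k * w $ k else 0)"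
    by (rule sum.cong) auto
  also have "\<dots> = v $ j * w $ j" using assms by simp
  finally show ?thesis .
qed

lemma mult_delta:
  fixes A :: "real mat"
  assumes A: "A \<in> carrier_mat m k" and r: "r < m"
  shows "(A *\<^sub>v Matrix.vec k (\<lambda>j. if s + j = c then 1 else 0)) $ r
     = (if s \<le> c \<and> c < s + k then A $$ (r, c - s) else 0)"
proof -
  have "(A *\<^sub>v Matrix.vec k (\<lambda>j. if s + j = c then 1 else 0)) $ r
      = (\<Sum>j\<in>{0..<k}. if j = c - s \<and> s \<le> c then A $$ (r, j) else 0)"
    using A r by (auto simp: scalar_prod_def row_def intro!: sum.cong)
  also have "\<dots> = (if s \<le> c \<and> c < s + k then A $$ (r, c - s) else 0)"
    by (cases "s \<le> c") (auto simp: sum.delta')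
  finally show ?thesis .
qed

lemma mult_line:
  fixes A :: "real mat"
  assumes A: "A \<in> carrier_mat m k" and a: "a \<in> carrier_vec k" and b: "b \<in> carrier_vec k" and r: "r < m"
  shows "(A *\<^sub>v (a + t \<cdot>\<^sub>v b)) $ r = (A *\<^sub>v a) $ r + t * (A *\<^sub>v b) $ r"
  using A a b r by (simp add: mult_add_distrib_mat_vec mult_mat_vec)

lemma kkt_comp:
  assumes z: "z \<in> carrier_vec (n + nl + nv)" and Gu: "Gu \<in> carrier_mat nl n"
    and Ab: "Ab \<in> carrier_mat nv n" and hu: "hu \<in> carrier_vec nl" and bb: "bb \<in> carrier_vec nv"
  shows "dim_vec (kkt_map n f Gu hu Ab bb z) = n + nl + nv"
    and "k < n \<Longrightarrow> kkt_map n f Gu hu Ab bb z $ k = grad n f (Matrix.vec n (\<lambda>j. z $ j)) $ k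
            + (transpose_mat Gu *\<^sub>v Matrix.vec nl (\<lambda>j. z $ (n + j))) $ k
            + (transpose_mat Ab *\<^sub>v Matrix.vec nv (\<lambda>j. z $ (n + nl + j))) $ k"
    and "n \<le> k \<Longrightarrow> k < n + nl \<Longrightarrow> kkt_map n f Gu hu Ab bb z $ k
            = z $ k * ((Gu *\<^sub>v Matrix.vec n (\<lambda>j. z $ j)) $ (k - n) - hu $ (k - n))"
    and "n + nl \<le> k \<Longrightarrow> k < n + nl + nv \<Longrightarrow> kkt_map n f Gu hu Ab bb z $ k
            = (Ab *\<^sub>v Matrix.vec n (\<lambda>j. z $ j)) $ (k - n - nl) - bb $ (k - n - nl)"
proof -
  have d: "dim_row Gu = nl" "dim_col Gu = n" "dim_row Ab = nv" "dim_col Ab = n" "dim_vec hu = nl" "dim_vec bb = nv"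
    using Gu Ab hu bb by auto
  show "dim_vec (kkt_map n f Gu hu Ab bb z) = n + nl + nv"
    by (simp add: kkt_map_def Let_def d Dg_def mat_diag_def)
  show "k < n \<Longrightarrow> kkt_map n f Gu hu Ab bb z $ k = grad n f (Matrix.vec n (\<lambda>j. z $ j)) $ k
            + (transpose_mat Gu *\<^sub>v Matrix.vec nl (\<lambda>j. z $ (n + j))) $ k
            + (transpose_mat Ab *\<^sub>v Matrix.vec nv (\<lambda>j. z $ (n + nl + j))) $ k"
    by (simp add: kkt_map_def Let_def d Dg_def grad_def)
  show "n \<le> k \<Longrightarrow> k < n + nl \<Longrightarrow> kkt_map n f Gu hu Ab bb z $ k
            = z $ k * ((Gu *\<^sub>v Matrix.vec n (\<lambda>j. z $ j)) $ (k - n) - hu $ (k - n))"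
  proof -
    assume k: "n \<le> k" "k < n + nl"
    then have "k - n < nl" by arith
    have "kkt_map n f Gu hu Ab bb z $ k = (Dg (Matrix.vec nl (\<lambda>j. z $ (n + j))) *\<^sub>v
        (Gu *\<^sub>v Matrix.vec n (\<lambda>j. z $ j) - hu)) $ (k - n)"
      using k \<open>k - n < nl\<close> by (simp add: kkt_map_def Let_def d Dg_def grad_def mat_diag_def)
    also have "\<dots> = z $ k * ((Gu *\<^sub>v Matrix.vec n (\<lambda>j. z $ j)) $ (k - n) - hu $ (k - n))"
      using k by (subst Dg_mult) (auto simp: d)
    finally show ?thesis .
  qed
  show "n + nl \<le> k \<Longrightarrow> k < n + nl + nv \<Longrightarrow> kkt_map n f Gu hu Ab bb z $ k
            = (Ab *\<^sub>v Matrix.vec n (\<lambda>j. z $ j)) $ (k - n - nl) - bb $ (k - n - nl)"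
  proof -
    assume k: "n + nl \<le> k" "k < n + nl + nv"
    then have "k - (n + nl) < nv" "\<not> k < n" "\<not> k - n < nl" "k - n - nl = k - (n + nl)" by arith+
    then show ?thesis using k by (simp add: kkt_map_def Let_def d Dg_def grad_def mat_diag_def)
  qed
qed

lemma extr_lem:
  fixes x lam nu :: "real vec"
  assumes x: "x \<in> carrier_vec n" and l: "lam \<in> carrier_vec nl" and u: "nu \<in> carrier_vec nv"
  defines "z \<equiv> x @\<^sub>v lam @\<^sub>v nu"
  shows "Matrix.vec n (\<lambda>j. (z + t \<cdot>\<^sub>v unit_vec (n + nl + nv) c) $ j)
          = x + t \<cdot>\<^sub>v Matrix.vec n (\<lambda>j. if j = c then 1 else 0)"
    and "Matrix.vec nl (\<lambda>j. (z + t \<cdot>\<^sub>v unit_vec (n + nl + nv) c) $ (n + j))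
          = lam + t \<cdot>\<^sub>v Matrix.vec nl (\<lambda>j. if n + j = c then 1 else 0)"
    and "Matrix.vec nv (\<lambda>j. (z + t \<cdot>\<^sub>v unit_vec (n + nl + nv) c) $ (n + nl + j))
          = nu + t \<cdot>\<^sub>v Matrix.vec nv (\<lambda>j. if n + nl + j = c then 1 else 0)"
    and "z + t \<cdot>\<^sub>v unit_vec (n + nl + nv) c \<in> carrier_vec (n + nl + nv)"
proof -
  have dz: "dim_vec z = n + nl + nv" using x l u by (simp add: z_def)
  show "Matrix.vec n (\<lambda>j. (z + t \<cdot>\<^sub>v unit_vec (n + nl + nv) c) $ j)
          = x + t \<cdot>\<^sub>v Matrix.vec n (\<lambda>j. if j = c then 1 else 0)"
    by (rule eq_vecI) (use x l u dz in \<open>simp_all add: z_def unit_vec_def\<close>)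
  show "Matrix.vec nl (\<lambda>j. (z + t \<cdot>\<^sub>v unit_vec (n + nl + nv) c) $ (n + j))
          = lam + t \<cdot>\<^sub>v Matrix.vec nl (\<lambda>j. if n + j = c then 1 else 0)"
    by (rule eq_vecI) (use x l u dz in \<open>simp_all add: z_def unit_vec_def\<close>)
  show "Matrix.vec nv (\<lambda>j. (z + t \<cdot>\<^sub>v unit_vec (n + nl + nv) c) $ (n + nl + j))
          = nu + t \<cdot>\<^sub>v Matrix.vec nv (\<lambda>j. if n + nl + j = c then 1 else 0)"
    by (rule eq_vecI) (use x l u dz in \<open>simp_all add: z_def unit_vec_def\<close>)
  show "z + t \<cdot>\<^sub>v unit_vec (n + nl + nv) c \<in> carrier_vec (n + nl + nv)"
    by (rule carrier_vecI) simp
qed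

theorem theorem2:
  fixes I :: "'f set" and i :: 'f and n :: nat
    and A G S :: "'f \<Rightarrow> real mat" and b h r :: "'f \<Rightarrow> real vec"
    and P Q :: "real mat" and \<pi> :: "real vec" and xs :: "'f \<Rightarrow> real vec"
    and lamh nuh :: "real vec"
  defines "X \<equiv> \<lambda>j. polyhedron n (A j) (b j) (G j) (h j)"
    and "Jf \<equiv> \<lambda>j y x. Jcost n P Q r S I j y x \<pi>"
    and "Gu \<equiv> G_under (G i) (h i) (xs i)" and "hu \<equiv> h_under (G i) (h i) (xs i)"
    and "Ab \<equiv> A_bar (A i) (G i) (h i) (xs i)" and "bb \<equiv> b_bar (b i) (G i) (h i) (xs i)"
    and "f \<equiv> \<lambda>y. Jcost n P Q r S I i y xs \<pi>"
  assumes "finite I" and "i \<in> I"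
    and "\<forall>j\<in>I. A j \<in> carrier_mat (dim_row (A j)) n \<and> b j \<in> carrier_vec (dim_row (A j))
              \<and> G j \<in> carrier_mat (dim_row (G j)) n \<and> h j \<in> carrier_vec (dim_row (G j))"
    and "\<forall>j\<in>I. X j \<noteq> {} \<and> compact (vemb n ` X j) \<and> slater n (A j) (b j) (G j) (h j)"
    and "\<forall>j\<in>I. r j \<in> carrier_vec n \<and> S j \<in> carrier_mat n n \<and> diagonal_mat (S j)
              \<and> pos_semidef n (S j)"
    and "\<pi> \<in> carrier_vec n"
    and "sym_mat P" and "pos_def n P"
    and "sym_mat Q" and "pos_semidef n Q"
    and "pos_def n (P - Q)"
    and "is_NE I X Jf xs"
    and "\<forall>x'. is_NE I X Jf x' \<longrightarrow> (\<forall>j\<in>I. x' j = xs j)"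
    and "is_kkt_point n f Gu hu Ab bb (xs i) lamh nuh"
    and "full_row_rank Ab"
  shows "{j. j < dim_row Gu \<and> lamh $ j = 0 \<and> (Gu *\<^sub>v xs i - hu) $ j = 0} = {}
         \<and> jacobian_is (n + dim_row Gu + dim_row Ab) (kkt_map n f Gu hu Ab bb)
              (xs i @\<^sub>v lamh @\<^sub>v nuh)
              (block3 (hess n f (xs i)) (transpose_mat Gu) (transpose_mat Ab)
                 (0\<^sub>m (dim_row Gu) n) (Dg (Gu *\<^sub>v xs i - hu)) (0\<^sub>m (dim_row Gu) (dim_row Ab))
                 Ab (0\<^sub>m (dim_row Ab) (dim_row Gu)) (0\<^sub>m (dim_row Ab) (dim_row Ab)))
         \<and> invertible_mat
              (block3 (hess n f (xs i)) (transpose_mat Gu) (transpose_mat Ab)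
                 (0\<^sub>m (dim_row Gu) n) (Dg (Gu *\<^sub>v xs i - hu)) (0\<^sub>m (dim_row Gu) (dim_row Ab))
                 Ab (0\<^sub>m (dim_row Ab) (dim_row Gu)) (0\<^sub>m (dim_row Ab) (dim_row Ab)))"
proof -
  let ?x = "xs i"
  define nl where "nl = dim_row Gu"
  define nv where "nv = dim_row Ab"
  let ?N = "n + nl + nv"
  have ii: "i \<in> I" by fact
  have Ai: "A i \<in> carrier_mat (dim_row (A i)) n" "b i \<in> carrier_vec (dim_row (A i))"
      "G i \<in> carrier_mat (dim_row (G i)) n" "h i \<in> carrier_vec (dim_row (G i))"
    using assms(10) ii by auto
  have ri: "r i \<in> carrier_vec n" "S i \<in> carrier_mat n n" using assms(12) ii by auto
  have pi: "\<pi> \<in> carrier_vec n" by fact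
  have Pc: "P \<in> carrier_mat n n" using assms(15) unfolding pos_def_def by auto
  have Ps: "transpose_mat P = P" using assms(14) unfolding sym_mat_def by auto
  have Qc: "Q \<in> carrier_mat n n" using assms(17) unfolding pos_semidef_def by auto
  have kkt: "?x \<in> carrier_vec n" "lamh \<in> carrier_vec nl" "nuh \<in> carrier_vec nv"
    "kkt_map n f Gu hu Ab bb (?x @\<^sub>v lamh @\<^sub>v nuh) = 0\<^sub>v ?N"
    using assms(21) unfolding is_kkt_point_def nl_def nv_def by blast+
  have dG: "dim_col (G i) = n" using Ai(3) by (rule carrier_matD)
  have dA: "dim_col (A i) = n" using Ai(1) by (rule carrier_matD)
  have dbi: "dim_vec (b i) = dim_row (A i)" using Ai(2) by (rule carrier_vecD)
  have Guc: "Gu \<in> carrier_mat nl n"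
  proof -
    have "dim_col Gu = n" unfolding Gu_def G_under_def rows_sel_def using dG by simp
    then show ?thesis unfolding nl_def by (intro carrier_matI) auto
  qed
  have huc: "hu \<in> carrier_vec nl"
  proof -
    have "dim_vec hu = nl" unfolding nl_def hu_def Gu_def G_under_def h_under_def rows_sel_def vec_sel_def by simp
    then show ?thesis by (intro carrier_vecI)
  qed
  let ?R = "rows_sel (G i) (act_idx (G i) (h i) (xs i))"
  have Rc: "?R \<in> carrier_mat (length (act_idx (G i) (h i) (xs i))) n"
    unfolding rows_sel_def using dG by (intro carrier_matI) auto
  have Abc': "Ab \<in> carrier_mat (dim_row (A i) + length (act_idx (G i) (h i) (xs i))) n"
    unfolding Ab_def A_bar_def by (rule carrier_append_rows[OF Ai(1) Rc])
  have Abc: "Ab \<in> carrier_mat nv n"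
  proof (rule carrier_matI)
    show "dim_row Ab = nv" by (simp add: nv_def)
    show "dim_col Ab = n" using carrier_matD(2)[OF Abc'] .
  qed
  have bbc: "bb \<in> carrier_vec nv"
  proof -
    have "dim_vec bb = dim_row (A i) + length (act_idx (G i) (h i) (xs i))"
      unfolding bb_def b_bar_def vec_sel_def using dbi by simp
    then show ?thesis using carrier_matD(1)[OF Abc'] unfolding nv_def by (intro carrier_vecI) simp
  qed
  have inact: "(Gu *\<^sub>v ?x - hu) $ j \<noteq> 0" if j: "j < nl" for j
  proof -
    let ?ks = "inact_idx (G i) (h i) (xs i)"
    have jl: "j < length ?ks" using j unfolding nl_def Gu_def G_under_def rows_sel_def by simp
    then have kin: "?ks ! j \<in> set ?ks" by (rule nth_mem)
    then have kk: "?ks ! j < dim_row (G i)" "(G i *\<^sub>v ?x) $ (?ks ! j) \<noteq> h i $ (?ks ! j)"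
      unfolding inact_idx_def by auto
    have rw: "row Gu j = row (G i) (?ks ! j)"
    proof (rule eq_vecI)
      show "dim_vec (row Gu j) = dim_vec (row (G i) (?ks ! j))"
        unfolding Gu_def G_under_def rows_sel_def by simp
      fix c assume "c < dim_vec (row (G i) (?ks ! j))"
      then show "row Gu j $ c = row (G i) (?ks ! j) $ c"
        using jl kk unfolding Gu_def G_under_def rows_sel_def by simp
    qed
    have "(Gu *\<^sub>v ?x) $ j = (G i *\<^sub>v ?x) $ (?ks ! j)"
      using j kk(1) rw unfolding nl_def by simp
    moreover have "hu $ j = h i $ (?ks ! j)"
      using jl unfolding hu_def h_under_def vec_sel_def by simp
    moreover have "(Gu *\<^sub>v ?x - hu) $ j = (Gu *\<^sub>v ?x) $ j - hu $ j"
      using j huc by simp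
    ultimately show ?thesis using kk(2) by simp
  qed
  have part1: "{j. j < nl \<and> lamh $ j = 0 \<and> (Gu *\<^sub>v xs i - hu) $ j = 0} = {}"
    using inact by auto
  define kv where "kv = Q *\<^sub>v sigma n I i xs + r i + S i *\<^sub>v \<pi>"
  have kvc: "kv \<in> carrier_vec n" using Qc ri pi by (simp add: kv_def sigma_def)
  have fq: "\<forall>y \<in> carrier_vec n. f y = 1/2 * (y \<bullet> (P *\<^sub>v y)) + y \<bullet> kv"
  proof
    fix y :: "real vec" assume y: "y \<in> carrier_vec n"
    have sc: "sigma n I i xs \<in> carrier_vec n" by (simp add: sigma_def)
    have "y \<bullet> kv = y \<bullet> (Q *\<^sub>v sigma n I i xs) + y \<bullet> r i + y \<bullet> (S i *\<^sub>v \<pi>)"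
      unfolding kv_def using y Qc ri pi sc
      by (simp add: scalar_prod_add_distrib[of _ n])
    moreover have "r i \<bullet> y = y \<bullet> r i" using ri y comm_scalar_prod by blast
    ultimately show "f y = 1/2 * (y \<bullet> (P *\<^sub>v y)) + y \<bullet> kv"
      by (simp add: f_def Jcost_def)
  qed
  have gradf: "grad n f y = P *\<^sub>v y + kv" if "y \<in> carrier_vec n" for y
    using grad_quad[OF fq Pc Ps kvc that] .
  have hessf: "hess n f ?x = P" using hess_quad[OF fq Pc Ps kvc kkt(1)] .
  have z0c: "?x @\<^sub>v lamh @\<^sub>v nuh \<in> carrier_vec ?N"
    using append_carrier_vec[OF kkt(1) append_carrier_vec[OF kkt(2) kkt(3)]] by (simp add: add.assoc)
  have xext: "Matrix.vec n (\<lambda>j. (?x @\<^sub>v lamh @\<^sub>v nuh) $ j) = ?x"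
    using kkt by (intro eq_vecI) auto
  have lam0: "lamh = 0\<^sub>v nl"
  proof (rule eq_vecI)
    fix j assume "j < dim_vec (0\<^sub>v nl)"
    then have j: "j < nl" by simp
    have e1: "kkt_map n f Gu hu Ab bb (?x @\<^sub>v lamh @\<^sub>v nuh) $ (n + j) = 0"
      using kkt(4) j by simp
    have e2: "kkt_map n f Gu hu Ab bb (?x @\<^sub>v lamh @\<^sub>v nuh) $ (n + j)
       = (?x @\<^sub>v lamh @\<^sub>v nuh) $ (n + j) * ((Gu *\<^sub>v Matrix.vec n (\<lambda>k. (?x @\<^sub>v lamh @\<^sub>v nuh) $ k)) $ (n + j - n) - hu $ (n + j - n))"
      by (rule kkt_comp(3)[OF z0c Guc Abc huc bbc]) (use j in simp_all)
    have e3: "(?x @\<^sub>v lamh @\<^sub>v nuh) $ (n + j) = lamh $ j" using kkt j by simp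
    have e4: "lamh $ j * ((Gu *\<^sub>v ?x) $ j - hu $ j) = 0"
      using e1 e2 e3 xext by simp
    have e5: "(Gu *\<^sub>v ?x) $ j - hu $ j \<noteq> 0"
      using inact[OF j] j huc by simp
    from e4 e5 have "lamh $ j = 0" by simp
    then show "lamh $ j = 0\<^sub>v nl $ j" using j by simp
  qed (use kkt in auto)
  define g where "g = Gu *\<^sub>v ?x - hu"
  have gc: "g \<in> carrier_vec nl"
  proof (rule carrier_vecI)
    show "dim_vec g = nl" unfolding g_def using huc by (simp only: index_minus_vec(2) carrier_vecD)
  qed
  define D where "D = block3 P (transpose_mat Gu) (transpose_mat Ab)
                 (0\<^sub>m nl n) (Dg g) (0\<^sub>m nl nv)
                 Ab (0\<^sub>m nv nl) (0\<^sub>m nv nv)"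
  have Dgc: "Dg g \<in> carrier_mat nl nl"
    unfolding Dg_def using carrier_vecD[OF gc] mat_diag_dim by metis
  have Dc: "D \<in> carrier_mat ?N ?N"
    unfolding D_def block3_def
    using four_block_carrier_mat[OF four_block_carrier_mat[OF Pc Dgc] zero_carrier_mat[of nv nv]] by simp
  have dims: "dim_row P = n" "dim_col P = n" "dim_row Gu = nl" "dim_col Gu = n"
    "dim_row Ab = nv" "dim_col Ab = n" "dim_vec g = nl"
    using Pc Guc Abc gc by auto
  have Dent: "D $$ (r, c) =
      (if r < n then (if c < n then P $$ (r, c) else if c < n + nl then transpose_mat Gu $$ (r, c - n)
                      else transpose_mat Ab $$ (r, c - (n + nl)))
       else if r < n + nl then (if c < n then 0 else if c < n + nl then (if r = c then g $ (r - n) else 0) else 0)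
       else (if c < n then Ab $$ (r - (n + nl), c) else 0))"
    if rc: "r < ?N" "c < ?N" for r c
    using rc by (auto simp: D_def block3_def append_rows_def Dg_def mat_diag_def dims)
  have jac: "jacobian_is ?N (kkt_map n f Gu hu Ab bb) (?x @\<^sub>v lamh @\<^sub>v nuh) D"
    unfolding jacobian_is_def
  proof (intro conjI allI impI)
    show "D \<in> carrier_mat (dim_vec (kkt_map n f Gu hu Ab bb (?x @\<^sub>v lamh @\<^sub>v nuh))) ?N"
      using Dc kkt_comp(1)[OF z0c Guc Abc huc bbc] by simp
    fix r c assume r: "r < dim_row D" and c: "c < ?N"
    then have r: "r < ?N" using Dc by simp
    let ?e = "unit_vec ?N c"
    define ex where "ex = Matrix.vec n (\<lambda>j. if j = c then (1::real) else 0)"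
    define el where "el = Matrix.vec nl (\<lambda>j. if n + j = c then (1::real) else 0)"
    define en where "en = Matrix.vec nv (\<lambda>j. if n + nl + j = c then (1::real) else 0)"
    have exc: "ex \<in> carrier_vec n" "el \<in> carrier_vec nl" "en \<in> carrier_vec nv"
      by (auto simp: ex_def el_def en_def)
    note ext = extr_lem[OF kkt(1) kkt(2) kkt(3), of _ c, folded ex_def el_def en_def]
    have xtc: "?x + t \<cdot>\<^sub>v ex \<in> carrier_vec n" for t using kkt exc by simp
    have lamtc: "lamh + t \<cdot>\<^sub>v el \<in> carrier_vec nl" for t using kkt exc by simp
    have nutc: "nuh + t \<cdot>\<^sub>v en \<in> carrier_vec nv" for t using kkt exc by simp
    have GuT: "transpose_mat Gu \<in> carrier_mat n nl" and AbT: "transpose_mat Ab \<in> carrier_mat n nv"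
      using Guc Abc by auto
    show "((\<lambda>t. kkt_map n f Gu hu Ab bb ((?x @\<^sub>v lamh @\<^sub>v nuh) + t \<cdot>\<^sub>v ?e) $ r)
            has_real_derivative D $$ (r, c)) (at 0)"
    proof (cases "r < n")
      case True
      define C where "C = (P *\<^sub>v ?x) $ r + kv $ r + (transpose_mat Gu *\<^sub>v lamh) $ r + (transpose_mat Ab *\<^sub>v nuh) $ r"
      define B where "B = (P *\<^sub>v ex) $ r + (transpose_mat Gu *\<^sub>v el) $ r + (transpose_mat Ab *\<^sub>v en) $ r"
      have "kkt_map n f Gu hu Ab bb ((?x @\<^sub>v lamh @\<^sub>v nuh) + t \<cdot>\<^sub>v ?e) $ r = C + t * B" for t
      proof -
        have "kkt_map n f Gu hu Ab bb ((?x @\<^sub>v lamh @\<^sub>v nuh) + t \<cdot>\<^sub>v ?e) $ r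
           = grad n f (?x + t \<cdot>\<^sub>v ex) $ r + (transpose_mat Gu *\<^sub>v (lamh + t \<cdot>\<^sub>v el)) $ r
             + (transpose_mat Ab *\<^sub>v (nuh + t \<cdot>\<^sub>v en)) $ r"
          using kkt_comp(2)[OF ext(4) Guc Abc huc bbc True, of f] ext(1-3) by simp
        also have "\<dots> = (P *\<^sub>v (?x + t \<cdot>\<^sub>v ex)) $ r + kv $ r + (transpose_mat Gu *\<^sub>v (lamh + t \<cdot>\<^sub>v el)) $ r
             + (transpose_mat Ab *\<^sub>v (nuh + t \<cdot>\<^sub>v en)) $ r"
          using gradf[OF xtc] True Pc kvc by simp
        also have "\<dots> = C + t * B"
          unfolding C_def B_def
          using mult_line[OF Pc kkt(1) exc(1) True] mult_line[OF GuT kkt(2) exc(2) True]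
            mult_line[OF AbT kkt(3) exc(3) True]
          by (simp add: algebra_simps)
        finally show ?thesis .
      qed
      then have fe: "(\<lambda>t. kkt_map n f Gu hu Ab bb ((?x @\<^sub>v lamh @\<^sub>v nuh) + t \<cdot>\<^sub>v ?e) $ r) = (\<lambda>t. C + t * B)"
        by auto
      have "B = D $$ (r, c)"
        unfolding B_def Dent[OF r c] ex_def el_def en_def
        using mult_delta[OF Pc True, of 0 c] mult_delta[OF GuT True, of n c] mult_delta[OF AbT True, of "n + nl" c]
          True c by auto
      then show ?thesis unfolding fe by (simp only:) (rule lin_deriv)
    next
      case False
      show ?thesis
      proof (cases "r < n + nl")
        case True
        define j where "j = r - n"
        have j: "j < nl" using True False by (simp add: j_def)
        define dl where "dl = (if r = c then (1::real) else 0)"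
        have "kkt_map n f Gu hu Ab bb ((?x @\<^sub>v lamh @\<^sub>v nuh) + t \<cdot>\<^sub>v ?e) $ r
              = 0 + t * (dl * g $ j) + t^2 * (dl * (Gu *\<^sub>v ex) $ j)" for t
        proof -
          have "kkt_map n f Gu hu Ab bb ((?x @\<^sub>v lamh @\<^sub>v nuh) + t \<cdot>\<^sub>v ?e) $ r
             = ((?x @\<^sub>v lamh @\<^sub>v nuh) + t \<cdot>\<^sub>v ?e) $ r * ((Gu *\<^sub>v (?x + t \<cdot>\<^sub>v ex)) $ j - hu $ j)"
            using kkt_comp(3)[OF ext(4) Guc Abc huc bbc, of r f] ext(1) True False
            by (simp add: j_def)
          also have "((?x @\<^sub>v lamh @\<^sub>v nuh) + t \<cdot>\<^sub>v ?e) $ r = t * dl"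
            using r c True False kkt lam0 by (auto simp: dl_def unit_vec_def)
          also have "(Gu *\<^sub>v (?x + t \<cdot>\<^sub>v ex)) $ j = (Gu *\<^sub>v ?x) $ j + t * (Gu *\<^sub>v ex) $ j"
            using mult_line[OF Guc kkt(1) exc(1) j] .
          finally show ?thesis using j huc Guc kkt unfolding g_def
            by (simp add: algebra_simps power2_eq_square)
        qed
        then have fe: "(\<lambda>t. kkt_map n f Gu hu Ab bb ((?x @\<^sub>v lamh @\<^sub>v nuh) + t \<cdot>\<^sub>v ?e) $ r)
            = (\<lambda>t. 0 + t * (dl * g $ j) + t^2 * (dl * (Gu *\<^sub>v ex) $ j))"
          by auto
        have "dl * g $ j = D $$ (r, c)"
          unfolding Dent[OF r c] dl_def j_def using True False by auto
        then show ?thesis unfolding fe by (simp only:) (rule quad_deriv)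
      next
        case False2: False
        define j where "j = r - (n + nl)"
        have j: "j < nv" using r False2 by (simp add: j_def)
        define C where "C = (Ab *\<^sub>v ?x) $ j - bb $ j"
        have "kkt_map n f Gu hu Ab bb ((?x @\<^sub>v lamh @\<^sub>v nuh) + t \<cdot>\<^sub>v ?e) $ r
              = C + t * (Ab *\<^sub>v ex) $ j" for t
        proof -
          have "kkt_map n f Gu hu Ab bb ((?x @\<^sub>v lamh @\<^sub>v nuh) + t \<cdot>\<^sub>v ?e) $ r
             = (Ab *\<^sub>v (?x + t \<cdot>\<^sub>v ex)) $ j - bb $ j"
            using kkt_comp(4)[OF ext(4) Guc Abc huc bbc, of r f] ext(1) r False2
            by (simp add: j_def)
          then show ?thesis using mult_line[OF Abc kkt(1) exc(1) j] unfolding C_def by simp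
        qed
        then have fe: "(\<lambda>t. kkt_map n f Gu hu Ab bb ((?x @\<^sub>v lamh @\<^sub>v nuh) + t \<cdot>\<^sub>v ?e) $ r)
            = (\<lambda>t. C + t * (Ab *\<^sub>v ex) $ j)"
          by auto
        have "(Ab *\<^sub>v ex) $ j = D $$ (r, c)"
          unfolding Dent[OF r c] ex_def j_def
          using mult_delta[OF Abc j, of 0 c] False False2 c by (auto simp: j_def)
        then show ?thesis unfolding fe by (simp only:) (rule lin_deriv)
      qed
    qed
  qed
  have Dinv: "invertible_mat D"
  proof (rule kernel_invertible[OF Dc])
    fix v :: "real vec" assume v: "v \<in> carrier_vec ?N" and Mv: "D *\<^sub>v v = 0\<^sub>v ?N"
    define u where "u = Matrix.vec n (\<lambda>j. v $ j)"
    define p where "p = Matrix.vec nl (\<lambda>j. v $ (n + j))"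
    define q where "q = Matrix.vec nv (\<lambda>j. v $ (n + nl + j))"
    have uc: "u \<in> carrier_vec n" and pc: "p \<in> carrier_vec nl" and qc: "q \<in> carrier_vec nv"
      by (auto simp: u_def p_def q_def)
    have dv: "dim_vec v = ?N" using v by (rule carrier_vecD)
    have vs: "v = (u @\<^sub>v p) @\<^sub>v q"
    proof (rule eq_vecI)
      show "dim_vec v = dim_vec ((u @\<^sub>v p) @\<^sub>v q)" using dv by (simp add: u_def p_def q_def)
      fix k assume "k < dim_vec ((u @\<^sub>v p) @\<^sub>v q)"
      then have k: "k < n + nl + nv" by (simp add: u_def p_def q_def)
      show "v $ k = ((u @\<^sub>v p) @\<^sub>v q) $ k"
        using k by (auto simp: u_def p_def q_def not_less)
    qed
    define M1 where "M1 = four_block_mat P (transpose_mat Gu) (0\<^sub>m nl n) (Dg g)"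
    define M2 where "M2 = transpose_mat Ab @\<^sub>r 0\<^sub>m nl nv"
    define M3 where "M3 = four_block_mat Ab (0\<^sub>m nv nl) (0\<^sub>m 0 (dim_col Ab)) (0\<^sub>m 0 (dim_col (0\<^sub>m nv nl :: real mat)))"
    define M4 where "M4 = (0\<^sub>m nv nv :: real mat)"
    have Deq: "D = four_block_mat M1 M2 M3 M4"
      unfolding D_def block3_def M1_def M2_def M3_def M4_def ..
    have GuT: "transpose_mat Gu \<in> carrier_mat n nl" and AbT: "transpose_mat Ab \<in> carrier_mat n nv"
      using Guc Abc by auto
    have dAb: "dim_col Ab = n" using Abc by (rule carrier_matD)
    have M1c: "M1 \<in> carrier_mat (n + nl) (n + nl)" unfolding M1_def
      using Pc Dgc by (rule four_block_carrier_mat)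
    have M2c: "M2 \<in> carrier_mat (n + nl) nv" unfolding M2_def
      by (rule carrier_append_rows[OF AbT zero_carrier_mat[of nl nv]])
    have M3c: "M3 \<in> carrier_mat nv (n + nl)" unfolding M3_def dAb
      using four_block_carrier_mat[OF Abc zero_carrier_mat[of 0 nl]] by simp
    have M4c: "M4 \<in> carrier_mat nv nv" unfolding M4_def by simp
    have upc: "u @\<^sub>v p \<in> carrier_vec (n + nl)" using uc pc by simp
    have e0: "D *\<^sub>v v = (M1 *\<^sub>v (u @\<^sub>v p) + M2 *\<^sub>v q) @\<^sub>v (M3 *\<^sub>v (u @\<^sub>v p) + M4 *\<^sub>v q)"
      unfolding Deq vs by (rule four_block_mat_mult_vec[OF M1c M2c M3c M4c upc qc])
    have e1: "M1 *\<^sub>v (u @\<^sub>v p) = (P *\<^sub>v u + transpose_mat Gu *\<^sub>v p) @\<^sub>v (0\<^sub>m nl n *\<^sub>v u + Dg g *\<^sub>v p)"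
      unfolding M1_def by (rule four_block_mat_mult_vec[OF Pc GuT _ Dgc uc pc]) simp
    have e2: "M2 *\<^sub>v q = (transpose_mat Ab *\<^sub>v q) @\<^sub>v (0\<^sub>m nl nv *\<^sub>v q)"
      unfolding M2_def by (rule mat_mult_append[OF AbT zero_carrier_mat[of nl nv] qc])
    have e3: "M3 *\<^sub>v (u @\<^sub>v p) = (Ab *\<^sub>v u + 0\<^sub>m nv nl *\<^sub>v p) @\<^sub>v (0\<^sub>m 0 n *\<^sub>v u + 0\<^sub>m 0 nl *\<^sub>v p)"
    proof -
      have "M3 = four_block_mat Ab (0\<^sub>m nv nl) (0\<^sub>m 0 n) (0\<^sub>m 0 nl)" unfolding M3_def dAb by simp
      then show ?thesis
        by (simp only:) (rule four_block_mat_mult_vec[OF Abc zero_carrier_mat zero_carrier_mat zero_carrier_mat uc pc])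
    qed
    have Mv': "(M1 *\<^sub>v (u @\<^sub>v p) + M2 *\<^sub>v q) @\<^sub>v (M3 *\<^sub>v (u @\<^sub>v p) + M4 *\<^sub>v q) = 0\<^sub>v ?N"
      using Mv e0 by simp
    have E1: "(P *\<^sub>v u) $ k + (transpose_mat Gu *\<^sub>v p) $ k + (transpose_mat Ab *\<^sub>v q) $ k = 0" if k: "k < n" for k
    proof -
      have "((M1 *\<^sub>v (u @\<^sub>v p) + M2 *\<^sub>v q) @\<^sub>v (M3 *\<^sub>v (u @\<^sub>v p) + M4 *\<^sub>v q)) $ k = 0"
        using Mv' k by simp
      then show ?thesis unfolding e1 e2 e3 using k Pc GuT AbT uc pc qc M4c by simp
    qed
    have E2: "g $ j * p $ j = 0" if j: "j < nl" for j
    proof -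
      have "((M1 *\<^sub>v (u @\<^sub>v p) + M2 *\<^sub>v q) @\<^sub>v (M3 *\<^sub>v (u @\<^sub>v p) + M4 *\<^sub>v q)) $ (n + j) = 0"
        using Mv' j by simp
      then have "(Dg g *\<^sub>v p) $ j = 0" unfolding e1 e2 e3 using j Pc GuT AbT uc pc qc M4c Dgc by simp
      then show ?thesis using Dg_mult[of j g p] j gc pc by simp
    qed
    have E3: "(Ab *\<^sub>v u) $ j = 0" if j: "j < nv" for j
    proof -
      have "((M1 *\<^sub>v (u @\<^sub>v p) + M2 *\<^sub>v q) @\<^sub>v (M3 *\<^sub>v (u @\<^sub>v p) + M4 *\<^sub>v q)) $ (n + nl + j) = 0"
        using Mv' j by simp
      then show ?thesis unfolding e1 e2 e3 M4_def using j Pc GuT AbT Abc uc pc qc Dgc by simp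
    qed
    have p0: "p = 0\<^sub>v nl"
    proof (rule eq_vecI)
      fix j assume "j < dim_vec (0\<^sub>v nl)"
      then have j: "j < nl" by simp
      have "g $ j \<noteq> 0" using inact[OF j] unfolding g_def .
      then show "p $ j = 0\<^sub>v nl $ j" using E2[OF j] j by simp
    qed (use pc in simp)
    have Au0: "Ab *\<^sub>v u = 0\<^sub>v nv"
      by (rule eq_vecI) (use E3 Abc in simp_all)
    have PA: "P *\<^sub>v u + transpose_mat Ab *\<^sub>v q = 0\<^sub>v n"
    proof (rule eq_vecI)
      fix k assume "k < dim_vec (0\<^sub>v n)"
      then have k: "k < n" by simp
      have "(transpose_mat Gu *\<^sub>v p) $ k = 0" using k GuT unfolding p0 by simp
      then show "(P *\<^sub>v u + transpose_mat Ab *\<^sub>v q) $ k = 0\<^sub>v n $ k"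
        using E1[OF k] k AbT by simp
    qed (use AbT in simp)
    have "u \<bullet> (P *\<^sub>v u + transpose_mat Ab *\<^sub>v q) = u \<bullet> (P *\<^sub>v u) + u \<bullet> (transpose_mat Ab *\<^sub>v q)"
      using uc Pc AbT qc by (simp add: scalar_prod_add_distrib[of _ n])
    moreover have "u \<bullet> (transpose_mat Ab *\<^sub>v q) = 0"
      using transpose_scalar[OF Abc qc uc] Au0 qc by simp
    ultimately have uPu: "u \<bullet> (P *\<^sub>v u) = 0" using PA uc by simp
    have u0: "u = 0\<^sub>v n"
      using assms(15) uPu uc unfolding pos_def_def by fastforce
    have "transpose_mat Ab *\<^sub>v q = 0\<^sub>v n"
    proof -
      have "P *\<^sub>v u = 0\<^sub>v n" unfolding u0 by (rule eq_vecI) (use Pc in \<open>auto simp: scalar_prod_def\<close>)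
      then show ?thesis using PA AbT qc by simp
    qed
    moreover have "vec_space.rank nv Ab = nv" using assms(22) unfolding full_row_rank_def nv_def .
    ultimately have q0: "q = 0\<^sub>v nv" using full_rank_ker[OF Abc _ qc] by blast
    show "v = 0\<^sub>v ?N"
    proof (rule eq_vecI)
      fix k assume "k < dim_vec (0\<^sub>v ?N)"
      then have k: "k < ?N" by simp
      have "v $ k = ((u @\<^sub>v p) @\<^sub>v q) $ k" using vs by simp
      also have "\<dots> = 0" unfolding u0 p0 q0 using k by simp
      finally show "v $ k = 0\<^sub>v ?N $ k" using k by simp
    qed (use dv in simp)
  qed
  have hq: "hess n f (xs i) = P" using hessf .
  have part1': "{j. j < nl \<and> lamh $ j = 0 \<and> g $ j = 0} = {}" using part1 unfolding g_def .
  show ?thesis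
    unfolding hq nl_def[symmetric] nv_def[symmetric] g_def[symmetric] D_def[symmetric]
    using part1' jac Dinv by blast
qed

end
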